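(* Let $k\geq 1$ be an integer and let $\mathcal{B}$ be a Boolean algebra with $2^{k+1}$ elements, viewed as an MV-algebra $(\mathcal{B},\oplus,\lceil,0)$ with $x\oplus y=x\vee y$ and greatest element $\varepsilon$. Define matrices $M_{2^m}\in\mathcal{M}_{2^m}(\{0,1\})$ recursively by $M_2=\begin{pmatrix}0&1\\1&1\end{pmatrix}$ and $M_{2^{m+1}}=\begin{pmatrix}\mathbf{0}_{2^m}&M_{2^m}\\ M_{2^m}&M_{2^m}\end{pmatrix}$, where $\mathbf{0}_{2^m}$ is the $2^m\times 2^m$ zero matrix, and let $C_{2^{k+1}}$ be the binary block code whose codewords are the rows of $M_{2^{k+1}}$. Then: (1) the elements of $\mathcal{B}$ can be enumerated as $\alpha_0,\alpha_1,\dots,\alpha_{2^{k+1}-1}$ so that the binary block code attached to $\mathcal{B}$ (with respect to this enumeration) has attached matrix equal to $M_{2^{k+1}}$; (2) there is a binary operation $*$ on $C_{2^{k+1}}$ such that $(C_{2^{k+1}},* )$ is a Boolean algebra isomorphic to $\mathcal{B}$ (i.e. there is a bijection $f:C_{2^{k+1}}\to\mathcal{B}$ with $f(w*w')=f(w)\oplus f(w')$ for all codewords $w,w'$).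
   Context: For a finite MV-algebra $X=\{\alpha_0,\alpha_1,\dots,\alpha_{n-1}\}$ of order $n$ with greatest element $\varepsilon=\lceil 0$, the binary block code attached to $X$ consists of $n$ codewords $w_0,\dots,w_{n-1}$ of length $n$, where $w_j=i_0i_1\cdots i_{n-1}$ with $i_s=1$ if $\alpha_j\oplus\alpha_s=\varepsilon$ and $i_s=0$ otherwise. The matrix attached to the code is the $n\times n$ $0/1$ matrix whose $j$-th row is $w_j$. A Boolean algebra is an MV-algebra in which $x\oplus x=x$ for all $x$; in it $x\oplus y=x\vee y$. *)

theory Defs
  imports Main
begin

text \<open>The matrix M_{2^m} as a function of row/column indices (entries 0/1),
  for m \<ge> 1; only indices < 2^m are meaningful.
  mmat (Suc 0) is M_2 = [[0,1],[1,1]];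
  mmat (Suc (Suc m)) is the block matrix [[0, M], [M, M]] with M = mmat (Suc m).
  The value at m = 0 is irrelevant.\<close>
fun mmat :: "nat \<Rightarrow> nat \<Rightarrow> nat \<Rightarrow> nat" where
  "mmat 0 i j = 0"
| "mmat (Suc 0) i j = (if i = 0 \<and> j = 0 then 0 else 1)"
| "mmat (Suc (Suc m)) i j =
     (let h = 2 ^ Suc m in
      if i < h then (if j < h then 0 else mmat (Suc m) i (j - h))
      else (if j < h then mmat (Suc m) (i - h) j else mmat (Suc m) (i - h) (j - h)))"

definition mrow :: "nat \<Rightarrow> nat \<Rightarrow> nat list" where
  "mrow m j = map (\<lambda>s. mmat m j s) [0..<2 ^ m]"

definition code_C :: "nat \<Rightarrow> nat list set" where
  "code_C m = {mrow m j | j. j < 2 ^ m}"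

text \<open>Boolean algebra viewed as MV-algebra: x \<oplus> y = sup x y, greatest element top.
  Entry (j,s) of the matrix attached to the code of the algebra w.r.t. enumeration alpha.\<close>
definition attached_mat :: "(nat \<Rightarrow> 'a::boolean_algebra) \<Rightarrow> nat \<Rightarrow> nat \<Rightarrow> nat" where
  "attached_mat alpha j s = (if sup (alpha j) (alpha s) = top then 1 else 0)"

end

theory Submission
  imports Defs
begin


lemma bit_high:
  fixes r q :: nat
  assumes "r < 2^q"
  shows "bit (r + 2^q) q \<and> (\<forall>p<q. bit (r + 2^q) p = bit r p)"
proof (intro conjI allI impI)
  have "(r + 2^q) div 2^q = 1" using assms by (simp add: div_add_self2)
  then show "bit (r + 2^q) q" by (simp add: bit_iff_odd)
next
  fix p assume "p < q"
  have d: "(2::nat)^p dvd 2^q" using \<open>p<q\<close> by (simp add: le_imp_power_dvd)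
  have "(r + 2^q) div 2^p = r div 2^p + 2^q div 2^p"
    using div_plus_div_distrib_dvd_right[OF d] by simp
  moreover have "(2::nat)^q div 2^p = 2^(q-p)" using \<open>p<q\<close> by (simp add: power_diff)
  moreover have "even ((2::nat)^(q-p))" using \<open>p<q\<close> by simp
  ultimately show "bit (r + 2^q) p = bit r p" by (simp add: bit_iff_odd)
qed

lemma bit_low:
  fixes i q :: nat
  assumes "i < 2^q" shows "\<not> bit i q"
  using assms by (simp add: bit_iff_odd)

lemma mmat_bits:
  "m \<ge> 1 \<Longrightarrow> i < 2^m \<Longrightarrow> j < 2^m \<Longrightarrow>
   mmat m i j = (if \<forall>p<m. bit i p \<or> bit j p then 1 else 0)"
proof (induction m arbitrary: i j rule: nat_induct_at_least)
  case base
  then have "i \<in> {0,1}" "j \<in> {0,1}" by auto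
  then show ?case by (auto simp: bit_iff_odd)
next
  case (Suc n)
  then obtain m where n: "n = Suc m" by (cases n) auto
  define h :: nat where "h = 2^n"
  have I: "\<And>i. i < 2*h \<Longrightarrow> h \<le> i \<Longrightarrow> bit i n \<and> (\<forall>p<n. bit (i-h) p = bit i p)"
  proof -
    fix i :: nat assume "i < 2*h" "h \<le> i"
    then have "i - h < 2^n" "i = (i-h) + 2^n" by (auto simp: h_def)
    then show "bit i n \<and> (\<forall>p<n. bit (i-h) p = bit i p)" using bit_high[of "i-h" n] by metis
  qed
  have L: "\<And>i. i < h \<Longrightarrow> \<not> bit i n" using bit_low h_def by blast
  have A: "(\<forall>p<Suc n. P p) = ((\<forall>p<n. P p) \<and> P n)" for P by (auto simp: less_Suc_eq)
  have ij: "i < 2*h" "j < 2*h" using Suc by (auto simp: h_def)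
  show ?case
  proof (cases "i < h")
    case True
    note ti = this
    show ?thesis
    proof (cases "j < h")
      case True
      then show ?thesis using ti L n h_def by (auto simp: A Let_def)
    next
      case False
      then have "mmat (Suc n) i j = mmat n i (j - h)" using ti n h_def by (simp add: Let_def)
      also have "\<dots> = (if \<forall>p<n. bit i p \<or> bit (j-h) p then 1 else 0)"
        using Suc.IH[of i "j-h"] ti False ij h_def by auto
      finally show ?thesis using I[of j] False ij L[OF ti] by (simp add: A)
    qed
  next
    case False
    note fi = this
    show ?thesis
    proof (cases "j < h")
      case True
      then have "mmat (Suc n) i j = mmat n (i-h) j" using fi n h_def by (simp add: Let_def)
      also have "\<dots> = (if \<forall>p<n. bit (i-h) p \<or> bit j p then 1 else 0)"
        using Suc.IH[of "i-h" j] fi True ij h_def by auto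
      finally show ?thesis using I[of i] fi ij L[OF True] by (simp add: A)
    next
      case False
      then have "mmat (Suc n) i j = mmat n (i-h) (j-h)" using fi n h_def by (simp add: Let_def)
      also have "\<dots> = (if \<forall>p<n. bit (i-h) p \<or> bit (j-h) p then 1 else 0)"
        using Suc.IH[of "i-h" "j-h"] fi False ij h_def by auto
      finally show ?thesis using I[of i] I[of j] fi False ij by (simp add: A)
    qed
  qed
qed

lemma bits_inj:
  fixes i j :: nat
  assumes "i < 2^n" "j < 2^n" "\<forall>p<n. bit i p = bit j p"
  shows "i = j"
proof -
  have "take_bit n i = i" "take_bit n j = j" using assms by (auto simp: take_bit_nat_eq_self_iff)
  then show ?thesis using assms(3) by (metis bit_eq_iff bit_take_bit_iff)
qed



definition is_atom :: "'a::boolean_algebra \<Rightarrow> bool" where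
  "is_atom a \<longleftrightarrow> a \<noteq> bot \<and> (\<forall>y. y \<le> a \<longrightarrow> y = bot \<or> y = a)"

definition bigsup :: "'a::boolean_algebra list \<Rightarrow> 'a" where
  "bigsup xs = foldr sup xs bot"

lemma atom_below:
  fixes x :: "'a::{boolean_algebra,finite}"
  assumes "x \<noteq> bot" shows "\<exists>a. is_atom a \<and> a \<le> x"
proof -
  obtain m where m: "m \<in> {y. y \<noteq> bot \<and> y \<le> x}" "\<forall>b \<in> {y. y \<noteq> bot \<and> y \<le> x}. b \<le> m \<longrightarrow> m = b"
    using finite_has_minimal[of "{y. y \<noteq> bot \<and> y \<le> x}"] assms by auto
  have "is_atom m" unfolding is_atom_def using m by (auto intro: order_trans)
  then show ?thesis using m by auto
qed

lemma atom_sup: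
  fixes a :: "'a::boolean_algebra"
  assumes "is_atom a" shows "a \<le> sup x y \<longleftrightarrow> a \<le> x \<or> a \<le> y"
proof
  assume h: "a \<le> sup x y"
  have "a = inf a (sup x y)" using h by (simp add: inf_absorb1)
  also have "\<dots> = sup (inf a x) (inf a y)" by (simp add: inf_sup_distrib1)
  finally have e: "a = sup (inf a x) (inf a y)" .
  have "inf a x = bot \<or> inf a x = a" "inf a y = bot \<or> inf a y = a"
    using assms unfolding is_atom_def by auto
  then show "a \<le> x \<or> a \<le> y" using e assms unfolding is_atom_def
    by (metis inf.absorb_iff1 sup_bot.right_neutral)
next
  assume "a \<le> x \<or> a \<le> y" then show "a \<le> sup x y" by (auto intro: le_supI1 le_supI2)
qed

lemma atom_compl:
  fixes a :: "'a::boolean_algebra"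
  assumes "is_atom a" shows "a \<le> x \<or> a \<le> - x"
  using atom_sup[OF assms, of x "-x"] by simp

lemma top_iff_atoms:
  fixes x :: "'a::{boolean_algebra,finite}"
  shows "x = top \<longleftrightarrow> (\<forall>a. is_atom a \<longrightarrow> a \<le> x)"
proof
  assume h: "\<forall>a. is_atom a \<longrightarrow> a \<le> x"
  show "x = top"
  proof (rule ccontr)
    assume "x \<noteq> top"
    then have "- x \<noteq> bot" by (metis compl_bot_eq double_compl)
    then obtain a where a: "is_atom a" "a \<le> - x" using atom_below by blast
    then have "a \<le> x" using h by auto
    then have "a \<le> inf x (-x)" using a by (simp only: le_inf_iff)
    then show False using a unfolding is_atom_def by (simp add: bot_unique)
  qed
qed simp

lemma eq_iff_atoms:
  fixes x y :: "'a::{boolean_algebra,finite}"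
  assumes "\<forall>a. is_atom a \<longrightarrow> (a \<le> x \<longleftrightarrow> a \<le> y)" shows "x = y"
proof -
  have "sup x (-y) = top" "sup y (-x) = top"
    using assms atom_compl by (auto simp: top_iff_atoms atom_sup)
  have le: "u \<le> v" if "sup v (-u) = top" for u v :: 'a
  proof -
    have "u = inf u (sup v (-u))" using that by simp
    also have "\<dots> = inf u v" by (simp add: inf_sup_distrib1)
    finally show ?thesis by (metis inf.orderI)
  qed
  show ?thesis using le[of x y] le[of y x] \<open>sup x (-y) = top\<close> \<open>sup y (-x) = top\<close> by simp
qed

lemma atoms_distinct:
  fixes a b :: "'a::boolean_algebra"
  assumes "is_atom a" "is_atom b" "a \<le> b" shows "a = b"
  using assms unfolding is_atom_def by auto

lemma atom_bigsup:
  fixes a :: "'a::boolean_algebra"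
  assumes "is_atom a" "\<forall>b\<in>set xs. is_atom b"
  shows "a \<le> bigsup xs \<longleftrightarrow> a \<in> set xs"
  using assms(2)
proof (induction xs)
  case Nil then show ?case using assms(1) by (simp add: bigsup_def is_atom_def bot_unique)
next
  case (Cons b xs)
  have "a \<le> bigsup (b # xs) \<longleftrightarrow> a \<le> b \<or> a \<le> bigsup xs"
    by (simp add: bigsup_def atom_sup[OF assms(1)])
  then show ?case using Cons atoms_distinct[OF assms(1)] by auto
qed



lemma card_atoms:
  assumes "card (UNIV :: ('a::{boolean_algebra, finite}) set) = 2 ^ n"
  shows "card {a::'a. is_atom a} = n"
proof -
  let ?A = "{a::'a. is_atom a}"
  have fA: "finite ?A" by simp
  let ?g = "\<lambda>x::'a. {a. is_atom a \<and> a \<le> x}"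
  have "inj_on ?g UNIV"
  proof (rule inj_onI)
    fix x y :: 'a assume h: "?g x = ?g y"
    show "x = y"
    proof (rule eq_iff_atoms, intro allI impI)
      fix a :: 'a assume "is_atom a"
      then show "a \<le> x \<longleftrightarrow> a \<le> y" using h by (metis (mono_tags, lifting) mem_Collect_eq)
    qed
  qed
  moreover have "?g ` UNIV \<subseteq> Pow ?A" by auto
  ultimately have c1: "card (UNIV::'a set) \<le> card (Pow ?A)"
    by (intro card_inj_on_le) auto
  define F where "F S = bigsup (SOME xs. set xs = S)" for S :: "'a set"
  have FS: "S \<subseteq> ?A \<Longrightarrow> is_atom a \<Longrightarrow> a \<le> F S \<longleftrightarrow> a \<in> S" for S and a :: 'a
  proof -
    assume S: "S \<subseteq> ?A" and a: "is_atom a"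
    have "finite S" using S fA finite_subset by blast
    then have "\<exists>xs. set xs = S" by (rule finite_list)
    then have "set (SOME xs. set xs = S) = S" by (rule someI_ex)
    then show ?thesis unfolding F_def using atom_bigsup[OF a, of "SOME xs. set xs = S"] S by auto
  qed
  have "inj_on F (Pow ?A)"
  proof (rule inj_onI)
    fix S T assume "S \<in> Pow ?A" "T \<in> Pow ?A" "F S = F T"
    then have S: "S \<subseteq> ?A" and T: "T \<subseteq> ?A" and eq: "F S = F T" by auto
    show "S = T"
    proof (rule set_eqI)
      fix a :: 'a
      show "a \<in> S \<longleftrightarrow> a \<in> T"
      proof (cases "is_atom a")
        case True
        then show ?thesis using FS[OF S True] FS[OF T True] eq by simp
      next
        case False
        then show ?thesis using S T by auto
      qed
    qed
  qed
  then have c2: "card (Pow ?A) \<le> card (UNIV::'a set)"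
    by (intro card_inj_on_le) auto
  have "card (Pow ?A) = 2 ^ card ?A" using card_Pow fA by blast
  then have "(2::nat) ^ card ?A = 2 ^ n" using c1 c2 assms by linarith
  then show ?thesis using power_inject_exp[of "2::nat"] by simp
qed

lemma part1:
  assumes "card (UNIV :: ('a::{boolean_algebra, finite}) set) = 2 ^ n"
  shows "\<exists>alpha :: nat \<Rightarrow> 'a. bij_betw alpha {..<2 ^ n} UNIV \<and>
     (\<forall>i j. (sup (alpha i) (alpha j) = top) \<longleftrightarrow> (\<forall>p<n. bit i p \<or> bit j p))"
proof -
  let ?A = "{a::'a. is_atom a}"
  obtain e where e: "bij_betw e {0..<n} ?A"
    using ex_bij_betw_nat_finite[of ?A] card_atoms[OF assms] by auto
  define alpha where "alpha j = bigsup (map e (filter (bit j) [0..<n]))" for j :: nat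
  have eA: "p < n \<Longrightarrow> is_atom (e p)" for p using e bij_betwE by fastforce
  have einj: "p < n \<Longrightarrow> q < n \<Longrightarrow> e p = e q \<Longrightarrow> p = q" for p q
    using e unfolding bij_betw_def inj_on_def by auto
  have esurj: "is_atom (a::'a) \<Longrightarrow> \<exists>p<n. a = e p" for a
  proof -
    assume "is_atom a"
    then have "a \<in> e ` {0..<n}" using e unfolding bij_betw_def by simp
    then show ?thesis by auto
  qed
  have key: "p < n \<Longrightarrow> e p \<le> alpha j \<longleftrightarrow> bit j p" for p j
  proof -
    assume p: "p < n"
    have "e p \<le> alpha j \<longleftrightarrow> e p \<in> set (map e (filter (bit j) [0..<n]))"
      unfolding alpha_def by (rule atom_bigsup) (auto intro: eA p)
    also have "\<dots> \<longleftrightarrow> bit j p" using p einj by auto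
    finally show ?thesis .
  qed
  have supt: "(sup (alpha i) (alpha j) = top) \<longleftrightarrow> (\<forall>p<n. bit i p \<or> bit j p)" for i j
  proof -
    have "(sup (alpha i) (alpha j) = top) \<longleftrightarrow> (\<forall>a. is_atom a \<longrightarrow> a \<le> alpha i \<or> a \<le> alpha j)"
      by (simp add: top_iff_atoms atom_sup)
    also have "\<dots> \<longleftrightarrow> (\<forall>p<n. bit i p \<or> bit j p)"
    proof
      assume h: "\<forall>a. is_atom a \<longrightarrow> a \<le> alpha i \<or> a \<le> alpha j"
      show "\<forall>p<n. bit i p \<or> bit j p"
      proof (intro allI impI)
        fix p assume p: "p < n"
        then have "e p \<le> alpha i \<or> e p \<le> alpha j" using h eA by blast
        then show "bit i p \<or> bit j p" using key[OF p] by blast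
      qed
    next
      assume h: "\<forall>p<n. bit i p \<or> bit j p"
      show "\<forall>a. is_atom a \<longrightarrow> a \<le> alpha i \<or> a \<le> alpha j"
      proof (intro allI impI)
        fix a :: 'a assume "is_atom a"
        then obtain p where p: "p < n" "a = e p" using esurj by blast
        then show "a \<le> alpha i \<or> a \<le> alpha j" using key[OF p(1)] h by blast
      qed
    qed
    finally show ?thesis .
  qed
  have inj: "inj_on alpha {..<2^n}"
  proof (rule inj_onI)
    fix i j assume "i \<in> {..<2^n}" "j \<in> {..<2^n}" "alpha i = alpha j"
    then have "\<forall>p<n. bit i p = bit j p" using key by metis
    then show "i = j" using bits_inj[of i n j] \<open>i \<in> {..<2^n}\<close> \<open>j \<in> {..<2^n}\<close> by simp
  qed
  then have "card (alpha ` {..<2^n}) = card (UNIV :: 'a set)"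
    using assms card_image[OF inj] by simp
  then have "alpha ` {..<2^n} = UNIV" by (intro card_subset_eq) auto
  then have "bij_betw alpha {..<2 ^ n} UNIV" using inj by (simp add: bij_betw_def)
  then show ?thesis using supt by blast
qed



lemma le_of_sup_compl:
  fixes u v :: "'a::boolean_algebra"
  assumes "sup v (-u) = top" shows "u \<le> v"
proof -
  have "u = inf u (sup v (-u))" using assms by simp
  also have "\<dots> = inf u v" by (simp add: inf_sup_distrib1)
  finally show ?thesis by (metis inf.orderI)
qed

theorem theorem4p4:
  fixes k :: nat
  assumes "k \<ge> 1"
    and "card (UNIV :: ('a::{boolean_algebra, finite}) set) = 2 ^ (k + 1)"
  shows "(\<exists>alpha :: nat \<Rightarrow> 'a.
            bij_betw alpha {..<2 ^ (k + 1)} UNIV \<and>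
            (\<forall>j < 2 ^ (k + 1). \<forall>s < 2 ^ (k + 1).
               attached_mat alpha j s = mmat (k + 1) j s))
       \<and> (\<exists>(star :: nat list \<Rightarrow> nat list \<Rightarrow> nat list) (f :: nat list \<Rightarrow> 'a).
            (\<forall>w \<in> code_C (k + 1). \<forall>w' \<in> code_C (k + 1). star w w' \<in> code_C (k + 1)) \<and>
            bij_betw f (code_C (k + 1)) UNIV \<and>
            (\<forall>w \<in> code_C (k + 1). \<forall>w' \<in> code_C (k + 1). f (star w w') = sup (f w) (f w')))"
proof -
  define n where "n = k + 1"
  define N :: nat where "N = 2 ^ n"
  have n1: "n \<ge> 1" by (simp add: n_def)
  obtain alpha :: "nat \<Rightarrow> 'a" where ab: "bij_betw alpha {..<N} UNIV"
    and supt: "\<And>i j. (sup (alpha i) (alpha j) = top) \<longleftrightarrow> (\<forall>p<n. bit i p \<or> bit j p)"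
    using part1[OF assms(2)] unfolding n_def N_def by blast
  have am: "attached_mat alpha j s = mmat n j s" if "j < N" "s < N" for j s
    using mmat_bits[OF n1, of j s] that supt[of j s] unfolding attached_mat_def N_def by simp
  have minj: "inj_on (mrow n) {..<N}"
  proof (rule inj_onI)
    fix i j assume i: "i \<in> {..<N}" and j: "j \<in> {..<N}" and eq: "mrow n i = mrow n j"
    have "\<forall>s\<in>set [0..<N]. mmat n i s = mmat n j s"
      using eq unfolding mrow_def N_def map_eq_conv by blast
    have st: "(sup (alpha i) (alpha s) = top) \<longleftrightarrow> (sup (alpha j) (alpha s) = top)" if s: "s < N" for s
    proof -
      have "mmat n i s = mmat n j s" using \<open>\<forall>s\<in>set [0..<N]. mmat n i s = mmat n j s\<close> s by simp
      then have "attached_mat alpha i s = attached_mat alpha j s" using am i j s by simp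
      then show ?thesis unfolding attached_mat_def by (simp split: if_splits)
    qed
    have all: "\<forall>y. (sup (alpha i) y = top) \<longleftrightarrow> (sup (alpha j) y = top)"
    proof
      fix y
      have "y \<in> alpha ` {..<N}" using ab unfolding bij_betw_def by simp
      then obtain s where "s < N" "y = alpha s" by auto
      then show "(sup (alpha i) y = top) \<longleftrightarrow> (sup (alpha j) y = top)" using st by simp
    qed
    have "alpha i \<le> alpha j" using all[rule_format, of "- alpha i"] le_of_sup_compl by simp
    moreover have "alpha j \<le> alpha i" using all[rule_format, of "- alpha j"] le_of_sup_compl by simp
    ultimately have "alpha i = alpha j" by simp
    then show "i = j" using ab i j unfolding bij_betw_def inj_on_def by blast
  qed
  have cC: "code_C n = mrow n ` {..<N}" unfolding code_C_def N_def by auto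
  have bm: "bij_betw (mrow n) {..<N} (code_C n)" using minj cC by (simp add: bij_betw_def)
  define f where "f = alpha \<circ> inv_into {..<N} (mrow n)"
  have fb: "bij_betw f (code_C n) UNIV"
    unfolding f_def by (rule bij_betw_trans[OF bij_betw_inv_into[OF bm] ab])
  define star where "star w w' = inv_into (code_C n) f (sup (f w) (f w'))" for w w'
  have fs: "f ` code_C n = UNIV" using fb by (simp add: bij_betw_def)
  have "\<forall>w \<in> code_C n. \<forall>w' \<in> code_C n. star w w' \<in> code_C n"
    unfolding star_def using fs by (metis UNIV_I inv_into_into)
  moreover have "\<forall>w \<in> code_C n. \<forall>w' \<in> code_C n. f (star w w') = sup (f w) (f w')"
    unfolding star_def using fs by (metis UNIV_I f_inv_into_f)
  ultimately have P2: "\<exists>(star :: nat list \<Rightarrow> nat list \<Rightarrow> nat list) (f :: nat list \<Rightarrow> 'a).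
            (\<forall>w \<in> code_C n. \<forall>w' \<in> code_C n. star w w' \<in> code_C n) \<and>
            bij_betw f (code_C n) UNIV \<and>
            (\<forall>w \<in> code_C n. \<forall>w' \<in> code_C n. f (star w w') = sup (f w) (f w'))"
    using fb by blast
  show ?thesis using P2 ab am unfolding n_def N_def by blast
qed

end
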